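(* Let $f:\mathbb{R}\to\mathbb{R}$ be twice continuously differentiable and let $u_L<u_U$ be such that $f$ is strictly convex or strictly concave on $[u_L,u_U]$, i.e. either $f''>0$ on $(u_L,u_U)$ or $f''<0$ on $(u_L,u_U)$. For $u_1\neq u_2$ in $[u_L,u_U]$ let $a(u_1,u_2)$ be the nonlinear average defined below. Then for all $u_1,u_2\in[u_L,u_U]$: (1) $a(u_1,u_2)$ is the same whether computed with $f$ or with $-f$; (2) $a$ is symmetric: $a(u_1,u_2)=a(u_2,u_1)$; (3) $a$ is an average: for $u_1\neq u_2$, $a(u_1,u_2)$ lies strictly between $u_1$ and $u_2$; (4) $a$ is strictly increasing in each of its two arguments; (5) $a$ is continuous at the diagonal, with $a(u_1,u_1)=u_1$, i.e. $a(v_1,v_2)\to u_1$ as $(v_1,v_2)\to(u_1,u_1)$ with $v_1\neq v_2$ in $[u_L,u_U]$.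
   Context: For $g:\mathbb{R}\to\mathbb{R}$ write $[g(u)]_{a}^{b}=g(b)-g(a)$. For $u_1\neq u_2$ (with $f'(u_1)\neq f'(u_2)$, which holds under the convexity/concavity hypothesis) the nonlinear average is $$a(u_1,u_2)=\frac{[f'(u)u-f(u)]_{u_1}^{u_2}}{[f'(u)]_{u_1}^{u_2}}=\frac{\int_{u_1}^{u_2}f''(u)\,u\,\mathrm{d}u}{\int_{u_1}^{u_2}f''(u)\,\mathrm{d}u},$$ and on the diagonal one sets $a(u,u)=u$. The function $f$ is the flux of the scalar conservation law $u_t+(f(u))_x=0$. *)

theory Defs
  imports "HOL-Analysis.Analysis"
begin

definition nl_avg :: "(real \<Rightarrow> real) \<Rightarrow> real \<Rightarrow> real \<Rightarrow> real" where
  "nl_avg f u1 u2 =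
     (if u1 = u2 then u1
      else ((deriv f u2 * u2 - f u2) - (deriv f u1 * u1 - f u1)) / (deriv f u2 - deriv f u1))"

end

theory Submission imports Defs begin

lemma wavg: fixes p q w1 w2 :: real
  assumes "w1>0" "w2>0" "p<q"
  shows "p < (p*w1+q*w2)/(w1+w2) \<and> (p*w1+q*w2)/(w1+w2) < q"
proof -
  have "p*w2 < q*w2" "p*w1<q*w1" using assms by auto
  then show ?thesis using assms by (simp add: field_simps)
qed

lemma abstract_mono:
  fixes A :: "real \<Rightarrow> real \<Rightarrow> real"
  assumes avg: "\<And>x y. x\<in>{L..U} \<Longrightarrow> y\<in>{L..U} \<Longrightarrow> x<y \<Longrightarrow> x < A x y \<and> A x y < y"
    and sym: "\<And>x y. A x y = A y x"
    and diag: "\<And>x. A x x = x"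
    and split: "\<And>x y z. x\<in>{L..U} \<Longrightarrow> z\<in>{L..U} \<Longrightarrow> x<y \<Longrightarrow> y<z \<Longrightarrow> A x y < A x z \<and> A x z < A y z"
    and v: "v \<in> {L..U}"
  shows "strict_mono_on {L..U} (\<lambda>u. A u v)"
proof (rule strict_mono_onI)
  fix x y assume x: "x\<in>{L..U}" and y: "y\<in>{L..U}" and xy: "x<y"
  consider "y < v" | "y = v" | "x < v \<and> v < y" | "x = v" | "v < x" by linarith
  then show "A x v < A y v"
  proof cases
    case 1 thus ?thesis using split[OF x v xy 1] by simp
  next
    case 2 thus ?thesis using avg[OF x y xy] diag by simp
  next
    case 3 thus ?thesis using avg[OF x v] avg[OF v y] sym[of y v] by force
  next
    case 4 thus ?thesis using avg[OF x y xy] diag sym[of y v] by simp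
  next
    case 5 thus ?thesis using split[OF v y 5 xy] sym by metis
  qed
qed

lemma convex_case:
  fixes f f' f'' :: "real \<Rightarrow> real"
  assumes d1: "\<And>x. (f has_real_derivative f' x) (at x)"
    and d2: "\<And>x. (f' has_real_derivative f'' x) (at x)"
    and pos: "\<forall>x\<in>{L<..<U}. f'' x > 0"
  shows "\<And>x y. x\<in>{L..U} \<Longrightarrow> y\<in>{L..U} \<Longrightarrow> x<y \<Longrightarrow> x < nl_avg f x y \<and> nl_avg f x y < y"
    and "\<And>x y z. x\<in>{L..U} \<Longrightarrow> z\<in>{L..U} \<Longrightarrow> x<y \<Longrightarrow> y<z \<Longrightarrow> nl_avg f x y < nl_avg f x z \<and> nl_avg f x z < nl_avg f y z"
proof -
  have df: "deriv f = f'" using d1 DERIV_imp_deriv by blast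
  define h where "h u = f' u * u - f u" for u
  have A: "nl_avg f x y = (h y - h x) / (f' y - f' x)" if "x \<noteq> y" for x y
    using that by (simp add: nl_avg_def df h_def)
  have dh: "(h has_real_derivative f'' u * u) (at u)" for u
  proof -
    have "(h has_real_derivative f'' u * u + 1 * f' u - f' u) (at u)"
      unfolding h_def[abs_def] by (intro DERIV_diff DERIV_mult d1 d2 DERIV_ident)
    thus ?thesis by simp
  qed
  have gpos: "f' y - f' x > 0" if xy: "x\<in>{L..U}" "y\<in>{L..U}" "x<y" for x y
  proof -
    obtain c where c: "x<c" "c<y" "f' y - f' x = (y - x) * f'' c" using MVT2[OF xy(3) d2] by blast
    have "f'' c > 0" using pos c xy by auto
    thus ?thesis using c xy by simp
  qed
  show avg: "x < nl_avg f x y \<and> nl_avg f x y < y" if xy: "x\<in>{L..U}" "y\<in>{L..U}" "x<y" for x y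
  proof -
    obtain c where c: "x<c" "c<y" "(h y - h x) * f'' c = (f' y - f' x) * (f'' c * c)"
      using GMVT'[OF xy(3), of h f' f'' "\<lambda>z. f'' z * z", OF DERIV_isCont[OF dh] DERIV_isCont[OF d2] d2 dh] by blast
    have p: "f'' c > 0" using pos c xy by auto
    have "h y - h x = (f' y - f' x) * c" using c(3) p
      by (metis mult.commute mult.left_commute mult_cancel_left less_irrefl)
    hence "nl_avg f x y = c" using A[of x y] xy gpos[OF xy] by simp
    thus ?thesis using c by simp
  qed
  show "nl_avg f x y < nl_avg f x z \<and> nl_avg f x z < nl_avg f y z"
    if xz: "x\<in>{L..U}" "z\<in>{L..U}" "x<y" "y<z" for x y z
  proof -
    have y: "y\<in>{L..U}" using xz by auto
    define w1 where "w1 = f' y - f' x"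
    define w2 where "w2 = f' z - f' y"
    have w1: "w1 > 0" using gpos[OF xz(1) y xz(3)] w1_def by simp
    have w2: "w2 > 0" using gpos[OF y xz(2) xz(4)] w2_def by simp
    have e1: "h y - h x = nl_avg f x y * w1" using A[of x y] xz w1 w1_def by simp
    have e2: "h z - h y = nl_avg f y z * w2" using A[of y z] xz w2 w2_def by simp
    have e3: "nl_avg f x z = (nl_avg f x y * w1 + nl_avg f y z * w2) / (w1 + w2)"
    proof -
      have "h z - h x = nl_avg f x y * w1 + nl_avg f y z * w2" using e1 e2 by simp
      moreover have "f' z - f' x = w1 + w2" using w1_def w2_def by simp
      ultimately show ?thesis using A[of x z] xz by simp
    qed
    have "nl_avg f x y < nl_avg f y z" using avg[OF xz(1) y xz(3)] avg[OF y xz(2) xz(4)] by linarith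
    thus ?thesis using wavg[OF w1 w2] e3 by simp
  qed
qed

lemma nl_sym: "nl_avg f x y = nl_avg f y x"
proof -
  have "(a-b)/(c-d) = (b-a)/(d-c)" for a b c d :: real
    by (metis minus_diff_eq minus_divide_divide)
  thus ?thesis unfolding nl_avg_def by auto
qed

lemma nl_neg:
  assumes d1: "\<And>x. (f has_real_derivative f' x) (at x)"
  shows "nl_avg (\<lambda>u. - f u) x y = nl_avg f x y"
proof -
  have df: "deriv f = f'" using d1 DERIV_imp_deriv by blast
  have dg: "deriv (\<lambda>u. - f u) = (\<lambda>u. - f' u)" using DERIV_minus[OF d1] DERIV_imp_deriv by blast
  have "(a-b)/(c-d) = (-a+b)/(-c+d)" for a b c d :: real
    by (metis minus_diff_eq minus_divide_divide uminus_add_conv_diff)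
  thus ?thesis unfolding nl_avg_def df dg by (auto simp: algebra_simps)
qed

lemma nl_cont:
  assumes avg: "\<And>x y. x\<in>{L..U} \<Longrightarrow> y\<in>{L..U} \<Longrightarrow> x \<noteq> y \<Longrightarrow> min x y < nl_avg f x y \<and> nl_avg f x y < max x y"
  shows "((\<lambda>p. nl_avg f (fst p) (snd p)) \<longlongrightarrow> u1)
             (at (u1, u1) within {p. fst p \<in> {L..U} \<and> snd p \<in> {L..U} \<and> fst p \<noteq> snd p})"
proof (rule Lim_withinI)
  fix e :: real assume e: "e > 0"
  show "\<exists>d>0. \<forall>p\<in>{p. fst p \<in> {L..U} \<and> snd p \<in> {L..U} \<and> fst p \<noteq> snd p}.
          0 < dist p (u1, u1) \<and> dist p (u1, u1) < d \<longrightarrow> dist (nl_avg f (fst p) (snd p)) u1 \<le> e"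
  proof (intro exI[of _ e] conjI ballI impI)
    fix p :: "real \<times> real" assume p: "p \<in> {p. fst p \<in> {L..U} \<and> snd p \<in> {L..U} \<and> fst p \<noteq> snd p}"
      and d: "0 < dist p (u1, u1) \<and> dist p (u1, u1) < e"
    obtain a b where ab: "p = (a,b)" by fastforce
    have "dist a u1 \<le> dist p (u1,u1)" "dist b u1 \<le> dist p (u1,u1)"
      using ab dist_fst_le[of p "(u1,u1)"] dist_snd_le[of p "(u1,u1)"] by auto
    hence "\<bar>a - u1\<bar> < e" "\<bar>b - u1\<bar> < e" using d by (auto simp: dist_real_def)
    moreover have "min a b < nl_avg f a b \<and> nl_avg f a b < max a b" using avg p ab by auto
    ultimately show "dist (nl_avg f (fst p) (snd p)) u1 \<le> e" using ab
      by (auto simp: dist_real_def abs_if min_def max_def split: if_splits)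
  qed (use e in auto)
qed

theorem lemma1:
  fixes f f' f'' :: "real \<Rightarrow> real" and uL uU :: real
  assumes d1: "\<And>x. (f has_real_derivative f' x) (at x)"
    and d2: "\<And>x. (f' has_real_derivative f'' x) (at x)"
    and c2: "continuous_on UNIV f''"
    and lu: "uL < uU"
    and cvx: "(\<forall>x\<in>{uL<..<uU}. f'' x > 0) \<or> (\<forall>x\<in>{uL<..<uU}. f'' x < 0)"
  shows "(\<forall>u1\<in>{uL..uU}. \<forall>u2\<in>{uL..uU}. nl_avg (\<lambda>u. - f u) u1 u2 = nl_avg f u1 u2)
    \<and> (\<forall>u1\<in>{uL..uU}. \<forall>u2\<in>{uL..uU}. nl_avg f u1 u2 = nl_avg f u2 u1)
    \<and> (\<forall>u1\<in>{uL..uU}. \<forall>u2\<in>{uL..uU}. u1 \<noteq> u2 \<longrightarrow>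
           min u1 u2 < nl_avg f u1 u2 \<and> nl_avg f u1 u2 < max u1 u2)
    \<and> (\<forall>v\<in>{uL..uU}. strict_mono_on {uL..uU} (\<lambda>u. nl_avg f u v)
                        \<and> strict_mono_on {uL..uU} (\<lambda>u. nl_avg f v u))
    \<and> (\<forall>u1\<in>{uL..uU}. nl_avg f u1 u1 = u1 \<and>
           ((\<lambda>p. nl_avg f (fst p) (snd p)) \<longlongrightarrow> u1)
             (at (u1, u1) within {p. fst p \<in> {uL..uU} \<and> snd p \<in> {uL..uU} \<and> fst p \<noteq> snd p}))"
proof -
  have neg: "nl_avg (\<lambda>u. - f u) x y = nl_avg f x y" for x y using nl_neg[OF d1] .
  have key: "(\<forall>x y. x\<in>{uL..uU} \<longrightarrow> y\<in>{uL..uU} \<longrightarrow> x<y \<longrightarrow> x < nl_avg f x y \<and> nl_avg f x y < y)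
     \<and> (\<forall>x y z. x\<in>{uL..uU} \<longrightarrow> z\<in>{uL..uU} \<longrightarrow> x<y \<longrightarrow> y<z \<longrightarrow> nl_avg f x y < nl_avg f x z \<and> nl_avg f x z < nl_avg f y z)"
    using cvx
  proof
    assume p: "\<forall>x\<in>{uL<..<uU}. f'' x > 0"
    show ?thesis using convex_case[OF d1 d2 p] by blast
  next
    assume p: "\<forall>x\<in>{uL<..<uU}. f'' x < 0"
    have p': "\<forall>x\<in>{uL<..<uU}. - f'' x > 0" using p by auto
    show ?thesis using convex_case[OF DERIV_minus[OF d1] DERIV_minus[OF d2] p'] neg by auto
  qed
  have avg: "\<And>x y. x\<in>{uL..uU} \<Longrightarrow> y\<in>{uL..uU} \<Longrightarrow> x<y \<Longrightarrow> x < nl_avg f x y \<and> nl_avg f x y < y"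
    using key by blast
  have spl: "\<And>x y z. x\<in>{uL..uU} \<Longrightarrow> z\<in>{uL..uU} \<Longrightarrow> x<y \<Longrightarrow> y<z \<Longrightarrow> nl_avg f x y < nl_avg f x z \<and> nl_avg f x z < nl_avg f y z"
    using key by blast
  have diag: "nl_avg f x x = x" for x by (simp add: nl_avg_def)
  have avg2: "min x y < nl_avg f x y \<and> nl_avg f x y < max x y"
    if "x\<in>{uL..uU}" "y\<in>{uL..uU}" "x \<noteq> y" for x y
  proof (cases "x < y")
    case True thus ?thesis using avg[of x y] that by auto
  next
    case False thus ?thesis using avg[of y x] that nl_sym[of f x y] by auto
  qed
  have mono: "strict_mono_on {uL..uU} (\<lambda>u. nl_avg f u v)" if "v \<in> {uL..uU}" for v
    using abstract_mono[of uL uU "nl_avg f", OF avg nl_sym diag spl that] by blast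
  have mono2: "strict_mono_on {uL..uU} (\<lambda>u. nl_avg f v u)" if "v \<in> {uL..uU}" for v
    using mono[OF that] nl_sym[of f v] by simp
  show ?thesis
    using neg nl_sym[of f] avg2 mono mono2 diag nl_cont[of uL uU f, OF avg2] by blast
qed

end
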